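(* Let $G$ be a graph of order $n$ with vertex degrees $d_1\ge d_2\ge\cdots\ge d_n$. Then $$\mathcal E(G)\le 2\sum_{i=1}^h d_i,$$ where $h=\min\{\nu^+(G),\nu^-(G)\}$.
   Context: All graphs are finite and simple. $\mathcal E(G)$ is the sum of absolute values of the adjacency eigenvalues of $G$; $\nu^+(G)$ and $\nu^-(G)$ are the numbers of positive and negative adjacency eigenvalues. *)

theory Defs
  imports "Jordan_Normal_Form.Char_Poly" "HOL-Computational_Algebra.Polynomial"
begin

(* A finite simple graph of order n: vertex set {0..<n}, symmetric irreflexive
   adjacency relation E (only its restriction to {0..<n} matters). *)
definition simple_graph :: "nat \<Rightarrow> (nat \<Rightarrow> nat \<Rightarrow> bool) \<Rightarrow> bool" where
  "simple_graph n E \<longleftrightarrow> (\<forall>i<n. \<forall>j<n. E i j \<longleftrightarrow> E j i) \<and> (\<forall>i<n. \<not> E i i)"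

definition adj_matrix :: "nat \<Rightarrow> (nat \<Rightarrow> nat \<Rightarrow> bool) \<Rightarrow> real mat" where
  "adj_matrix n E = mat n n (\<lambda>(i,j). if E i j then 1 else 0)"

definition degree_v :: "nat \<Rightarrow> (nat \<Rightarrow> nat \<Rightarrow> bool) \<Rightarrow> nat \<Rightarrow> nat" where
  "degree_v n E i = card {j. j < n \<and> E i j}"

definition sorted_degrees :: "nat \<Rightarrow> (nat \<Rightarrow> nat \<Rightarrow> bool) \<Rightarrow> nat list" where
  "sorted_degrees n E = rev (sort (map (degree_v n E) [0..<n]))"

definition adj_eigenvalues :: "nat \<Rightarrow> (nat \<Rightarrow> nat \<Rightarrow> bool) \<Rightarrow> complex multiset" where
  "adj_eigenvalues n E = proots (char_poly (map_mat complex_of_real (adj_matrix n E)))"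

definition energy :: "nat \<Rightarrow> (nat \<Rightarrow> nat \<Rightarrow> bool) \<Rightarrow> real" where
  "energy n E = (\<Sum>x\<in>#adj_eigenvalues n E. cmod x)"

definition nu_plus :: "nat \<Rightarrow> (nat \<Rightarrow> nat \<Rightarrow> bool) \<Rightarrow> nat" where
  "nu_plus n E = size (filter_mset (\<lambda>x. x \<in> \<real> \<and> Re x > 0) (adj_eigenvalues n E))"

definition nu_minus :: "nat \<Rightarrow> (nat \<Rightarrow> nat \<Rightarrow> bool) \<Rightarrow> nat" where
  "nu_minus n E = size (filter_mset (\<lambda>x. x \<in> \<real> \<and> Re x < 0) (adj_eigenvalues n E))"

end

theory Submission
  imports Defs "Jordan_Normal_Form.Schur_Decomposition" "HOL-Library.Multiset"
begin

definition tr :: "'a::comm_ring_1 mat \<Rightarrow> 'a" where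
  "tr M = (\<Sum>i<dim_row M. M $$ (i,i))"

lemma tr_comm:
  assumes X: "X \<in> carrier_mat n m" and Y: "Y \<in> carrier_mat m n"
  shows "tr (X * Y) = tr (Y * X)"
proof -
  have "tr (X * Y) = (\<Sum>i<n. \<Sum>j<m. X $$ (i,j) * Y $$ (j,i))"
    using X Y by (simp add: tr_def scalar_prod_def atLeast0LessThan)
  also have "\<dots> = (\<Sum>j<m. \<Sum>i<n. Y $$ (j,i) * X $$ (i,j))"
    by (subst sum.swap) (simp add: mult.commute)
  also have "\<dots> = tr (Y * X)"
    using X Y by (simp add: tr_def scalar_prod_def atLeast0LessThan)
  finally show ?thesis .
qed

lemma tr_similar:
  assumes "similar_mat_wit A B P Q" "A \<in> carrier_mat n n"
  shows "tr A = tr B"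
proof -
  from similar_mat_witD2[OF assms(2) assms(1)]
  have B: "B \<in> carrier_mat n n" and P: "P \<in> carrier_mat n n" and Q: "Q \<in> carrier_mat n n"
    and QP: "Q * P = 1\<^sub>m n" and A: "A = P * B * Q" by auto
  have "tr A = tr (P * (B * Q))" using A P B Q by (simp add: assoc_mult_mat)
  also have "\<dots> = tr ((B * Q) * P)" using P B Q by (intro tr_comm) auto
  also have "\<dots> = tr (B * (Q * P))" using P B Q by (simp add: assoc_mult_mat)
  also have "\<dots> = tr B" using QP B by simp
  finally show ?thesis .
qed

lemma tr_all_roots:
  fixes M :: "complex mat"
  assumes M: "M \<in> carrier_mat n n"
    and roots: "\<And>\<mu>. poly (char_poly M) \<mu> = 0 \<Longrightarrow> \<mu> = c"
  shows "tr M = of_nat n * c"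
proof -
  obtain as where cp: "char_poly M = (\<Prod>a\<leftarrow>as. [:- a, 1:])" and len: "length as = n"
    using char_poly_factorized[OF M] by blast
  obtain B P Q where sd: "schur_decomposition M as = (B,P,Q)" by (cases "schur_decomposition M as") auto
  from schur_decomposition[OF M cp sd]
  have sim: "similar_mat_wit M B P Q" and ut: "upper_triangular B" and dg: "diag_mat B = as" by auto
  from similar_mat_witD2[OF M sim] have B: "B \<in> carrier_mat n n" by auto
  have "tr M = tr B" by (rule tr_similar[OF sim M])
  also have "\<dots> = sum_list as"
  proof -
    have "tr B = (\<Sum>i<n. as ! i)" using B dg by (auto simp: tr_def diag_mat_def)
    also have "\<dots> = sum_list as" using len by (simp add: sum_list_sum_nth atLeast0LessThan)
    finally show ?thesis .
  qed
  also have "\<dots> = of_nat n * c"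
  proof -
    have "\<forall>a\<in>set as. a = c"
    proof
      fix a assume "a \<in> set as"
      hence "poly (char_poly M) a = 0" unfolding cp
        by (induct as) (auto simp: poly_prod_list)
      thus "a = c" by (rule roots)
    qed
    hence "as = replicate n c" using len replicate_length_same[of as c] by simp
    thus ?thesis by (simp add: sum_list_replicate)
  qed
  finally show ?thesis .
qed

lemma cp_of_real:
  fixes C :: "real mat" assumes C: "C \<in> carrier_mat n n"
  shows "char_poly (map_mat complex_of_real C) = map_poly of_real (char_poly C)"
  by (rule comm_ring_hom.char_poly_hom[OF of_real_hom.comm_ring_hom_axioms C])

lemma sym_root_real:
  fixes C :: "real mat"
  assumes C: "C \<in> carrier_mat n n"
    and sym: "\<And>i j. i < n \<Longrightarrow> j < n \<Longrightarrow> C $$ (i,j) = C $$ (j,i)"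
    and root: "poly (char_poly (map_mat complex_of_real C)) \<mu> = 0"
  shows "\<mu> = of_real (Re \<mu>)"
proof -
  let ?M = "map_mat complex_of_real C"
  have M: "?M \<in> carrier_mat n n" using C by simp
  have "eigenvalue ?M \<mu>" using root eigenvalue_root_char_poly[OF M] by simp
  then obtain v where ev: "eigenvector ?M v \<mu>" unfolding eigenvalue_def by blast
  hence v: "v \<in> carrier_vec n" and v0: "v \<noteq> 0\<^sub>v n" and Mv: "?M *\<^sub>v v = \<mu> \<cdot>\<^sub>v v"
    using M unfolding eigenvector_def by auto
  have row: "(\<Sum>j<n. of_real (C $$ (i,j)) * v $ j) = \<mu> * v $ i" if i: "i < n" for i
  proof -
    have "(?M *\<^sub>v v) $ i = \<mu> * v $ i" using Mv i v by simp
    moreover have "(?M *\<^sub>v v) $ i = (\<Sum>j<n. of_real (C $$ (i,j)) * v $ j)"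
      using i C v by (simp add: scalar_prod_def atLeast0LessThan)
    ultimately show ?thesis by simp
  qed
  define s where "s = (\<Sum>i<n. \<Sum>j<n. cnj (v $ i) * of_real (C $$ (i,j)) * v $ j)"
  define N where "N = (\<Sum>i<n. cnj (v $ i) * v $ i)"
  have s1: "s = \<mu> * N"
  proof -
    have "s = (\<Sum>i<n. cnj (v $ i) * (\<Sum>j<n. of_real (C $$ (i,j)) * v $ j))"
      unfolding s_def by (simp add: sum_distrib_left mult.assoc)
    also have "\<dots> = (\<Sum>i<n. cnj (v $ i) * (\<mu> * v $ i))" using row by simp
    also have "\<dots> = \<mu> * N" unfolding N_def by (simp add: sum_distrib_left algebra_simps)
    finally show ?thesis .
  qed
  have s2: "cnj s = s"
  proof -
    have "cnj s = (\<Sum>i<n. \<Sum>j<n. v $ i * of_real (C $$ (i,j)) * cnj (v $ j))"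
      unfolding s_def by (simp add: cnj_sum)
    also have "\<dots> = (\<Sum>j<n. \<Sum>i<n. v $ i * of_real (C $$ (i,j)) * cnj (v $ j))"
      by (rule sum.swap)
    also have "\<dots> = s" unfolding s_def
      by (intro sum.cong refl) (simp add: sym mult.commute mult.left_commute)
    finally show ?thesis .
  qed
  have Nreal: "N = of_real (\<Sum>i<n. (cmod (v $ i))^2)"
    unfolding N_def of_real_sum complex_norm_square by (simp add: mult.commute)
  have Npos: "(\<Sum>i<n. (cmod (v $ i))^2) > 0"
  proof -
    from v v0 obtain i where i: "i < n" and vi: "v $ i \<noteq> 0" by (metis eq_vecI carrier_vecD index_zero_vec(1) index_zero_vec(2))
    have "(cmod (v $ i))^2 \<le> (\<Sum>i<n. (cmod (v $ i))^2)"
      using i by (intro member_le_sum) auto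
    moreover have "(cmod (v $ i))^2 > 0" using vi by simp
    ultimately show ?thesis by linarith
  qed
  define r where "r = (\<Sum>i<n. (cmod (v $ i))^2)"
  have N0: "N \<noteq> 0" using Nreal Npos by (metis less_irrefl of_real_eq_0_iff)
  have "\<mu> = s / N" using s1 N0 by simp
  moreover have "Im s = 0" using s2 by (metis cnj.simps(2) complex_cnj_cancel_iff  neg_equal_zero)
  ultimately have "Im \<mu> = 0" using Nreal by (simp add: Im_divide)
  thus ?thesis by (simp add: complex_eq_iff)
qed

lemma sym_real_eigvec:
  fixes C :: "real mat"
  assumes C: "C \<in> carrier_mat n n"
    and sym: "\<And>i j. i < n \<Longrightarrow> j < n \<Longrightarrow> C $$ (i,j) = C $$ (j,i)"
    and root: "poly (char_poly (map_mat complex_of_real C)) \<mu> = 0"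
  shows "\<exists>x. x \<in> carrier_vec n \<and> x \<noteq> 0\<^sub>v n \<and> C *\<^sub>v x = Re \<mu> \<cdot>\<^sub>v x"
proof -
  have mu: "\<mu> = of_real (Re \<mu>)" by (rule sym_root_real[OF C sym root])
  have "poly (char_poly C) (Re \<mu>) = 0"
    using root unfolding cp_of_real[OF C] by (subst (asm) mu) (simp add: of_real_hom.poly_map_poly)
  hence "eigenvalue C (Re \<mu>)" using eigenvalue_root_char_poly[OF C] by simp
  then obtain x where "eigenvector C x (Re \<mu>)" unfolding eigenvalue_def by blast
  thus ?thesis using C unfolding eigenvector_def by auto
qed

definition eigsys :: "nat \<Rightarrow> (nat \<Rightarrow> nat \<Rightarrow> real) \<Rightarrow> nat \<Rightarrow> (nat \<Rightarrow> nat \<Rightarrow> real) \<Rightarrow> (nat \<Rightarrow> real) \<Rightarrow> bool" where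
  "eigsys n a k u l \<longleftrightarrow> (\<forall>i<k. \<forall>j<k. (\<Sum>b<n. u i b * u j b) = (if i = j then 1 else 0)) \<and>
     (\<forall>i<k. \<forall>x<n. (\<Sum>b<n. a x b * u i b) = l i * u i x)"

lemma defl_apply:
  fixes a :: "nat \<Rightarrow> nat \<Rightarrow> real"
  shows "(\<Sum>b<n. (a y b - (\<Sum>i<k. (l i - c) * u i y * u i b)) * z b) =
     (\<Sum>b<n. a y b * z b) - (\<Sum>i<k. (l i - c) * u i y * (\<Sum>b<n. u i b * z b))"
proof -
  have "(\<Sum>b<n. (a y b - (\<Sum>i<k. (l i - c) * u i y * u i b)) * z b) =
     (\<Sum>b<n. a y b * z b) - (\<Sum>b<n. \<Sum>i<k. (l i - c) * u i y * u i b * z b)"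
    by (simp add: left_diff_distrib sum_subtractf sum_distrib_right)
  also have "(\<Sum>b<n. \<Sum>i<k. (l i - c) * u i y * u i b * z b) = (\<Sum>i<k. (l i - c) * u i y * (\<Sum>b<n. u i b * z b))"
    by (subst sum.swap) (simp add: sum_distrib_left mult.assoc)
  finally show ?thesis .
qed

lemma eig_step:
  fixes a :: "nat \<Rightarrow> nat \<Rightarrow> real"
  assumes sym: "\<And>x y. x < n \<Longrightarrow> y < n \<Longrightarrow> a x y = a y x"
    and es: "eigsys n a k u l" and kn: "k < n"
  shows "\<exists>w m. (\<Sum>b<n. w b * w b) = 1 \<and> (\<forall>i<k. (\<Sum>b<n. u i b * w b) = 0) \<and>
     (\<forall>x<n. (\<Sum>b<n. a x b * w b) = m * w x)"
proof -
  have orth: "\<And>i j. i < k \<Longrightarrow> j < k \<Longrightarrow> (\<Sum>b<n. u i b * u j b) = (if i = j then 1 else 0)"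
   and eig: "\<And>i x. i < k \<Longrightarrow> x < n \<Longrightarrow> (\<Sum>b<n. a x b * u i b) = l i * u i x"
    using es unfolding eigsys_def by auto
  define t where "t = (\<Sum>x<n. a x x) - (\<Sum>i<k. l i)"
  define c where "c = (t + 1) / real (n - k)"
  have nkc: "real (n - k) * c = t + 1" using kn unfolding c_def by simp
  define Cf where "Cf = (\<lambda>x y. a x y - (\<Sum>i<k. (l i - c) * u i x * u i y))"
  define C where "C = mat n n (\<lambda>(x,y). Cf x y)"
  have C: "C \<in> carrier_mat n n" unfolding C_def by simp
  have Csym: "\<And>x y. x < n \<Longrightarrow> y < n \<Longrightarrow> C $$ (x,y) = C $$ (y,x)"
    unfolding C_def Cf_def using sym by (simp add: mult.commute mult.left_commute)
  have trC: "(\<Sum>x<n. Cf x x) = t + real k * c"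
  proof -
    have "(\<Sum>x<n. Cf x x) = (\<Sum>x<n. a x x) - (\<Sum>x<n. \<Sum>i<k. (l i - c) * u i x * u i x)"
      unfolding Cf_def by (simp add: sum_subtractf)
    also have "(\<Sum>x<n. \<Sum>i<k. (l i - c) * u i x * u i x) = (\<Sum>i<k. (l i - c) * (\<Sum>x<n. u i x * u i x))"
      by (subst sum.swap) (simp add: sum_distrib_left mult.assoc)
    also have "\<dots> = (\<Sum>i<k. (l i - c))" using orth by simp
    finally show ?thesis unfolding t_def by (simp add: sum_subtractf)
  qed
  have "\<exists>\<mu>. poly (char_poly (map_mat complex_of_real C)) \<mu> = 0 \<and> \<mu> \<noteq> of_real c"
  proof (rule ccontr)
    assume "\<not> ?thesis"
    hence "\<And>\<mu>. poly (char_poly (map_mat complex_of_real C)) \<mu> = 0 \<Longrightarrow> \<mu> = of_real c" by blast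
    from tr_all_roots[where n=n, OF _ this] C
    have "tr (map_mat complex_of_real C) = of_nat n * of_real c" by simp
    moreover have "tr (map_mat complex_of_real C) = of_real (\<Sum>x<n. Cf x x)"
      unfolding tr_def C_def by (simp add: of_real_sum)
    ultimately have "t + real k * c = real n * c" unfolding trC
      by (metis of_real_eq_iff of_real_mult of_real_of_nat_eq)
    moreover have "real (n - k) = real n - real k" using kn by simp
    ultimately show False using nkc by (simp add: algebra_simps)
  qed
  then obtain \<mu> where root: "poly (char_poly (map_mat complex_of_real C)) \<mu> = 0" and muc: "\<mu> \<noteq> of_real c"
    by blast
  define r where "r = Re \<mu>"
  have rc: "r \<noteq> c" using sym_root_real[OF C Csym root] muc unfolding r_def by metis
  obtain xv where xv: "xv \<in> carrier_vec n" and x0: "xv \<noteq> 0\<^sub>v n" and Cx: "C *\<^sub>v xv = r \<cdot>\<^sub>v xv"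
    using sym_real_eigvec[OF C Csym root] unfolding r_def by blast
  define x where "x = (\<lambda>b. xv $ b)"
  have Cxf: "(\<Sum>b<n. Cf y b * x b) = r * x y" if y: "y < n" for y
  proof -
    have "(C *\<^sub>v xv) $ y = r * x y" using Cx y xv unfolding x_def by simp
    moreover have "(C *\<^sub>v xv) $ y = (\<Sum>b<n. Cf y b * x b)"
      using y xv unfolding C_def x_def by (simp add: scalar_prod_def atLeast0LessThan)
    ultimately show ?thesis by simp
  qed
  have Cu: "(\<Sum>y<n. Cf b y * u j y) = c * u j b" if b: "b < n" and j: "j < k" for b j
  proof -
    have "(\<Sum>y<n. Cf b y * u j y) = l j * u j b - (\<Sum>i<k. (l i - c) * u i b * (\<Sum>y<n. u i y * u j y))"
      unfolding Cf_def defl_apply eig[OF j b] ..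
    also have "(\<Sum>i<k. (l i - c) * u i b * (\<Sum>y<n. u i y * u j y)) = (l j - c) * u j b"
      using j by (simp add: orth if_distrib cong: if_cong)
    finally show ?thesis by (simp add: algebra_simps)
  qed
  have ux: "(\<Sum>b<n. u j b * x b) = 0" if j: "j < k" for j
  proof -
    have "(\<Sum>y<n. u j y * (\<Sum>b<n. Cf y b * x b)) = r * (\<Sum>y<n. u j y * x y)"
      using Cxf by (simp add: sum_distrib_left mult.left_commute)
    moreover have "(\<Sum>y<n. u j y * (\<Sum>b<n. Cf y b * x b)) = (\<Sum>b<n. x b * (\<Sum>y<n. Cf b y * u j y))"
    proof -
      have "(\<Sum>y<n. u j y * (\<Sum>b<n. Cf y b * x b)) = (\<Sum>y<n. \<Sum>b<n. x b * (Cf b y * u j y))"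
        using Csym unfolding C_def by (intro sum.cong refl) (auto simp: sum_distrib_left mult.commute mult.left_commute)
      also have "\<dots> = (\<Sum>b<n. x b * (\<Sum>y<n. Cf b y * u j y))"
        by (subst sum.swap) (simp add: sum_distrib_left)
      finally show ?thesis .
    qed
    moreover have "\<dots> = c * (\<Sum>b<n. u j b * x b)"
      using Cu[OF _ j] by (simp add: sum_distrib_left mult.commute mult.left_commute)
    ultimately have "(r - c) * (\<Sum>b<n. u j b * x b) = 0" by (simp add: algebra_simps)
    thus ?thesis using rc by simp
  qed
  have Ax: "(\<Sum>b<n. a y b * x b) = r * x y" if y: "y < n" for y
  proof -
    have "(\<Sum>b<n. Cf y b * x b) = (\<Sum>b<n. a y b * x b)"
      unfolding Cf_def defl_apply using ux by simp
    thus ?thesis using Cxf[OF y] by simp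
  qed
  define N where "N = (\<Sum>b<n. x b * x b)"
  have Npos: "N > 0"
  proof -
    from xv x0 obtain i where i: "i < n" and vi: "x i \<noteq> 0" unfolding x_def
      by (metis eq_vecI carrier_vecD index_zero_vec(1) index_zero_vec(2))
    have "x i * x i \<le> N" unfolding N_def using i by (intro member_le_sum) auto
    moreover have "x i * x i > 0" using vi by (metis not_real_square_gt_zero)
    ultimately show ?thesis by linarith
  qed
  define w where "w = (\<lambda>b. x b / sqrt N)"
  have "(\<Sum>b<n. w b * w b) = N / (sqrt N * sqrt N)"
    unfolding w_def N_def by (simp add: sum_divide_distrib)
  also have "\<dots> = 1" using Npos by simp
  finally have w1: "(\<Sum>b<n. w b * w b) = 1" .
  have w2: "\<forall>i<k. (\<Sum>b<n. u i b * w b) = 0"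
    using ux unfolding w_def by (simp add: sum_divide_distrib[symmetric])
  have w3: "\<forall>y<n. (\<Sum>b<n. a y b * w b) = r * w y"
    using Ax unfolding w_def by (simp add: sum_divide_distrib[symmetric])
  show ?thesis using w1 w2 w3 by blast
qed

lemma eigsys_exists:
  fixes a :: "nat \<Rightarrow> nat \<Rightarrow> real"
  assumes sym: "\<And>x y. x < n \<Longrightarrow> y < n \<Longrightarrow> a x y = a y x"
  shows "k \<le> n \<Longrightarrow> \<exists>u l. eigsys n a k u l"
proof (induction k)
  case 0
  show ?case unfolding eigsys_def by auto
next
  case (Suc k)
  then obtain u l where es: "eigsys n a k u l" by auto
  from eig_step[OF sym es] Suc.prems obtain w m where
    w1: "(\<Sum>b<n. w b * w b) = 1" and w2: "\<forall>i<k. (\<Sum>b<n. u i b * w b) = 0"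
    and w3: "\<forall>x<n. (\<Sum>b<n. a x b * w b) = m * w x" by auto
  have w2': "\<forall>i<k. (\<Sum>b<n. w b * u i b) = 0" using w2 by (simp add: mult.commute)
  have "eigsys n a (Suc k) (u(k := w)) (l(k := m))"
    using es w1 w2 w2' w3 unfolding eigsys_def
    by (auto simp: less_Suc_eq)
  thus ?case by blast
qed

lemma proots_linear_prod:
  "proots (\<Prod>a\<leftarrow>as. [:- a, 1:]) = mset (as :: 'a :: idom list)"
proof (induction as)
  case Nil
  then show ?case by simp
next
  case (Cons a as)
  have nz: "(\<Prod>a\<leftarrow>as. [:- a, 1:]) \<noteq> (0 :: 'a poly)"
    by (auto simp: prod_list_zero_iff)
  have "proots ([:- a, 1:] * (\<Prod>a\<leftarrow>as. [:- a, 1:])) = proots [:- a, 1:] + proots (\<Prod>a\<leftarrow>as. [:- a, 1:])"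
    by (rule proots_mult) (use nz in auto)
  moreover have "proots [:- a, 1:] = {#a#}" using proots_linear_factor[of "-a"] by simp
  ultimately show ?case using Cons by simp
qed

lemma spectral:
  fixes A :: "real mat"
  assumes A: "A \<in> carrier_mat n n"
    and sym: "\<And>x y. x < n \<Longrightarrow> y < n \<Longrightarrow> A $$ (x,y) = A $$ (y,x)"
  shows "\<exists>u l. (\<forall>i<n. \<forall>j<n. (\<Sum>b<n. u i b * u j b) = (if i = j then 1 else 0)) \<and>
     (\<forall>x<n. \<forall>y<n. (\<Sum>i<n. u i x * u i y) = (if x = y then 1 else 0)) \<and>
     (\<forall>i<n. \<forall>x<n. (\<Sum>b<n. A $$ (x,b) * u i b) = l i * u i x) \<and>
     char_poly A = (\<Prod>i\<leftarrow>[0..<n]. [:- l i, 1:])"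
proof -
  define a where "a = (\<lambda>x y. A $$ (x,y))"
  obtain u l where es: "eigsys n a n u l" using eigsys_exists[of n a n] sym unfolding a_def by auto
  have orth: "\<And>i j. i < n \<Longrightarrow> j < n \<Longrightarrow> (\<Sum>b<n. u i b * u j b) = (if i = j then 1 else 0)"
   and eig: "\<And>i x. i < n \<Longrightarrow> x < n \<Longrightarrow> (\<Sum>b<n. A $$ (x,b) * u i b) = l i * u i x"
    using es unfolding eigsys_def a_def by auto
  define U where "U = mat n n (\<lambda>(x,i). u i x)"
  have U: "U \<in> carrier_mat n n" "transpose_mat U \<in> carrier_mat n n" unfolding U_def by auto
  have UtU: "transpose_mat U * U = 1\<^sub>m n"
    by (rule eq_matI) (auto simp: U_def scalar_prod_def atLeast0LessThan orth)
  have UUt: "U * transpose_mat U = 1\<^sub>m n"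
    by (rule mat_mult_left_right_inverse[OF U(2) U(1) UtU])
  have orth2: "(\<Sum>i<n. u i x * u i y) = (if x = y then 1 else 0)" if "x < n" "y < n" for x y
  proof -
    have "(U * transpose_mat U) $$ (x,y) = (\<Sum>i<n. u i x * u i y)"
      using that by (simp add: U_def scalar_prod_def atLeast0LessThan)
    thus ?thesis using UUt that by simp
  qed
  define D where "D = mat n n (\<lambda>(i,j). if i = j then l i else 0)"
  have D: "D \<in> carrier_mat n n" unfolding D_def by simp
  have Aexp: "A $$ (x,y) = (\<Sum>i<n. l i * u i x * u i y)" if x: "x < n" and y: "y < n" for x y
  proof -
    have "(\<Sum>i<n. l i * u i x * u i y) = (\<Sum>i<n. (\<Sum>b<n. A $$ (x,b) * u i b) * u i y)"
      using eig x by simp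
    also have "\<dots> = (\<Sum>b<n. A $$ (x,b) * (\<Sum>i<n. u i b * u i y))"
      by (simp add: sum_distrib_left sum_distrib_right mult.assoc) (rule sum.swap)
    also have "\<dots> = (\<Sum>b<n. A $$ (x,b) * (if b = y then 1 else 0))"
      using orth2 y by simp
    also have "\<dots> = A $$ (x,y)" using y by (simp add: if_distrib cong: if_cong)
    finally show ?thesis by simp
  qed
  have UD: "(U * D) $$ (x,i) = u i x * l i" if "x < n" "i < n" for x i
  proof -
    have "(U * D) $$ (x,i) = (\<Sum>j<n. u j x * (if j = i then l j else 0))"
      using that by (simp add: U_def D_def scalar_prod_def atLeast0LessThan)
    also have "\<dots> = u i x * l i" using that by (simp add: if_distrib cong: if_cong)
    finally show ?thesis .
  qed
  have AUDU: "A = U * D * transpose_mat U"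
  proof (rule eq_matI)
    fix x y assume x: "x < dim_row (U * D * transpose_mat U)" and y: "y < dim_col (U * D * transpose_mat U)"
    hence xn: "x < n" and yn: "y < n" using U D by auto
    have "(U * D * transpose_mat U) $$ (x,y) = (\<Sum>i<n. (U * D) $$ (x,i) * u i y)"
      using xn yn U D by (simp add: U_def scalar_prod_def atLeast0LessThan)
    also have "\<dots> = (\<Sum>i<n. l i * u i x * u i y)" using UD xn by (simp add: mult.commute mult.left_commute)
    finally show "A $$ (x,y) = (U * D * transpose_mat U) $$ (x,y)" using Aexp xn yn by simp
  qed (insert A U D, auto)
  have "similar_mat_wit A D U (transpose_mat U)"
    unfolding similar_mat_wit_def Let_def using A U D UtU UUt AUDU by auto
  hence "char_poly A = char_poly D" by (intro char_poly_similar) (auto simp: similar_mat_def)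
  also have "\<dots> = (\<Prod>a\<leftarrow>diag_mat D. [:- a, 1:])"
    by (rule char_poly_upper_triangular[OF D]) (auto simp: upper_triangular_def D_def)
  also have "diag_mat D = map l [0..<n]"
    by (rule nth_equalityI) (auto simp: diag_mat_def D_def)
  finally have cp: "char_poly A = (\<Prod>i\<leftarrow>[0..<n]. [:- l i, 1:])" by (simp add: comp_def)
  show ?thesis using orth orth2 eig cp by blast
qed

lemma sorted_desc_sum:
  fixes s :: "nat list" and p :: nat and t :: real
  assumes srt: "sorted_wrt (\<ge>) s" and p: "p < length s" and t: "t = real (s ! p)"
  shows "(\<Sum>k<length s. max (real (s!k) - t) 0) = (\<Sum>k<p. real (s!k) - t)"
proof -
  have split: "{..<length s} = {..<p} \<union> {p..<length s}" using p by auto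
  have "(\<Sum>k<length s. max (real (s!k) - t) 0) = (\<Sum>k<p. max (real (s!k) - t) 0) + (\<Sum>k\<in>{p..<length s}. max (real (s!k) - t) 0)"
    unfolding split by (rule sum.union_disjoint) auto
  also have "(\<Sum>k\<in>{p..<length s}. max (real (s!k) - t) 0) = 0"
  proof (rule sum.neutral, safe)
    fix k assume "k \<in> {p..<length s}"
    hence "s ! k \<le> s ! p" using srt p by (cases "k = p") (auto simp: sorted_wrt_iff_nth_less)
    thus "max (real (s!k) - t) 0 = 0" using t by simp
  qed
  also have "(\<Sum>k<p. max (real (s!k) - t) 0) = (\<Sum>k<p. real (s!k) - t)"
  proof (rule sum.cong, simp)
    fix k assume "k \<in> {..<p}"
    hence "s ! p \<le> s ! k" using srt p by (auto simp: sorted_wrt_iff_nth_less)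
    thus "max (real (s!k) - t) 0 = real (s!k) - t" using t by simp
  qed
  finally show ?thesis by simp
qed

lemma top_weights:
  fixes d :: "nat \<Rightarrow> nat" and w :: "nat \<Rightarrow> real"
  assumes w01: "\<And>x. x < n \<Longrightarrow> 0 \<le> w x \<and> w x \<le> 1"
    and wsum: "(\<Sum>x<n. w x) = real p" and pn: "p \<le> n"
  shows "(\<Sum>x<n. real (d x) * w x) \<le> real (sum_list (take p (rev (sort (map d [0..<n])))))"
proof -
  define s where "s = rev (sort (map d [0..<n]))"
  have len: "length s = n" unfolding s_def by simp
  have srt: "sorted_wrt (\<ge>) s" unfolding s_def by (simp add: sorted_wrt_rev)
  have ms: "mset s = mset (map d [0..<n])" unfolding s_def by (simp only: mset_rev mset_sort)
  define t where "t = (if p < n then real (s ! p) else 0)"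
  have t0: "t \<ge> 0" unfolding t_def by simp
  have eqf: "(\<Sum>k<n. f (s ! k)) = (\<Sum>x<n. f (d x))" for f :: "nat \<Rightarrow> real"
  proof -
    have "(\<Sum>k<n. f (s ! k)) = sum_list (map f s)"
      using len by (simp add: sum_list_sum_nth atLeast0LessThan)
    also have "\<dots> = sum_list (map f (map d [0..<n]))"
      by (metis ms mset_map sum_mset_sum_list)
    also have "\<dots> = (\<Sum>x<n. f (d x))"
      by (simp add: sum_list_sum_nth atLeast0LessThan)
    finally show ?thesis .
  qed
  have "(\<Sum>x<n. real (d x) * w x) = (\<Sum>x<n. (real (d x) - t) * w x) + t * real p"
    by (simp add: left_diff_distrib sum_subtractf sum_distrib_left[symmetric] wsum)
  also have "(\<Sum>x<n. (real (d x) - t) * w x) \<le> (\<Sum>x<n. max (real (d x) - t) 0)"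
  proof (rule sum_mono)
    fix x assume "x \<in> {..<n}"
    hence "0 \<le> w x" "w x \<le> 1" using w01 by auto
    thus "(real (d x) - t) * w x \<le> max (real (d x) - t) 0"
      by (cases "real (d x) - t \<ge> 0") (auto simp: mult_left_le mult_nonpos_nonneg max_def)
  qed
  also have "(\<Sum>x<n. max (real (d x) - t) 0) = (\<Sum>k<n. max (real (s!k) - t) 0)"
    using eqf[of "\<lambda>v. max (real v - t) 0"] by simp
  also have "\<dots> = (\<Sum>k<p. real (s!k) - t)"
  proof (cases "p < n")
    case True
    then show ?thesis using sorted_desc_sum[OF srt, of p t] len unfolding t_def by simp
  next
    case False
    hence "p = n" "t = 0" using pn unfolding t_def by auto
    thus ?thesis by simp
  qed
  finally have "(\<Sum>x<n. real (d x) * w x) \<le> (\<Sum>k<p. real (s!k))"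
    by (simp add: sum_subtractf)
  also have "(\<Sum>k<p. real (s!k)) = real (sum_list (take p s))"
  proof -
    have "sum_list (take p s) = (\<Sum>k<p. s ! k)"
      using pn len by (simp add: sum_list_sum_nth atLeast0LessThan min_def)
    thus ?thesis by simp
  qed
  finally show ?thesis unfolding s_def .
qed

lemma map_poly_linear_prod:
  "map_poly complex_of_real (\<Prod>i\<leftarrow>xs. [:- l i, 1:]) = (\<Prod>i\<leftarrow>xs. [:- complex_of_real (l i), 1:])"
proof -
  interpret m: map_poly_comm_ring_hom "complex_of_real" ..
  show ?thesis
  proof (induct xs)
    case (Cons a xs)
    have "map_poly complex_of_real (\<Prod>i\<leftarrow>a#xs. [:- l i, 1:]) = map_poly complex_of_real [:- l a, 1:] * map_poly complex_of_real (\<Prod>i\<leftarrow>xs. [:- l i, 1:])"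
      by (simp only: list.map prod_list.Cons m.hom_mult)
    also have "map_poly complex_of_real [:- l a, 1:] = [:- complex_of_real (l a), 1:]" by simp
    finally show ?case by (simp only: Cons list.map prod_list.Cons)
  qed simp
qed

lemma sign_bound:
  fixes A :: "real mat" and u :: "nat \<Rightarrow> nat \<Rightarrow> real"
  assumes Anneg: "\<And>x y. x < n \<Longrightarrow> y < n \<Longrightarrow> A $$ (x,y) \<ge> 0"
    and sym: "\<And>x y. x < n \<Longrightarrow> y < n \<Longrightarrow> A $$ (x,y) = A $$ (y,x)"
    and eig: "\<forall>i<n. \<forall>x<n. (\<Sum>b<n. A $$ (x,b) * u i b) = l i * u i x"
    and orth: "\<forall>i<n. \<forall>j<n. (\<Sum>b<n. u i b * u j b) = (if i = j then 1 else 0)"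
    and S: "S \<subseteq> {..<n}" and sg: "\<sigma> = 1 \<or> \<sigma> = -1"
  shows "\<sigma> * (\<Sum>i\<in>S. l i) \<le> (\<Sum>x<n. (\<Sum>y<n. A $$ (x,y)) * (\<Sum>i\<in>S. (u i x)^2))"
proof -
  define w where "w = (\<lambda>x. \<Sum>i\<in>S. (u i x)^2)"
  have li: "l i = (\<Sum>x<n. \<Sum>y<n. A $$ (x,y) * (u i x * u i y))" if i: "i < n" for i
  proof -
    have "(\<Sum>x<n. \<Sum>y<n. A $$ (x,y) * (u i x * u i y)) = (\<Sum>x<n. u i x * (\<Sum>y<n. A $$ (x,y) * u i y))"
      by (simp add: sum_distrib_left mult.commute mult.left_commute)
    also have "\<dots> = (\<Sum>x<n. l i * (u i x * u i x))" using eig i by (simp add: mult.commute mult.left_commute)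
    also have "\<dots> = l i" using orth i by (simp add: sum_distrib_left[symmetric])
    finally show ?thesis by simp
  qed
  have "\<sigma> * (\<Sum>i\<in>S. l i) = (\<Sum>i\<in>S. \<Sum>x<n. \<Sum>y<n. A $$ (x,y) * (\<sigma> * (u i x * u i y)))"
    using S li by (simp add: sum_distrib_left mult.left_commute subset_eq)
  also have "\<dots> = (\<Sum>x<n. \<Sum>y<n. A $$ (x,y) * (\<Sum>i\<in>S. \<sigma> * (u i x * u i y)))"
    by (simp add: sum.swap[of _ S] sum_distrib_left)
  also have "\<dots> \<le> (\<Sum>x<n. \<Sum>y<n. A $$ (x,y) * ((w x + w y) / 2))"
  proof (intro sum_mono mult_left_mono)
    fix x y assume x: "x \<in> {..<n}" and y: "y \<in> {..<n}"
    show "0 \<le> A $$ (x,y)" using Anneg x y by auto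
    have "\<sigma> * (u i x * u i y) \<le> ((u i x)^2 + (u i y)^2) / 2" for i
    proof -
      have "0 \<le> (u i x - u i y)^2" "0 \<le> (u i x + u i y)^2" by simp_all
      thus ?thesis using sg by (auto simp: power2_eq_square algebra_simps)
    qed
    hence "(\<Sum>i\<in>S. \<sigma> * (u i x * u i y)) \<le> (\<Sum>i\<in>S. ((u i x)^2 + (u i y)^2) / 2)"
      by (intro sum_mono)
    also have "\<dots> = (\<Sum>i\<in>S. (u i x)^2 + (u i y)^2) / 2" by (rule sum_divide_distrib[symmetric])
    also have "\<dots> = (w x + w y) / 2" unfolding w_def by (simp only: sum.distrib)
    finally show "(\<Sum>i\<in>S. \<sigma> * (u i x * u i y)) \<le> (w x + w y) / 2" .
  qed
  also have "\<dots> = ((\<Sum>x<n. \<Sum>y<n. A $$ (x,y) * w x) + (\<Sum>x<n. \<Sum>y<n. A $$ (x,y) * w y)) / 2"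
    by (simp add: add_divide_distrib sum.distrib sum_divide_distrib distrib_left)
  also have "(\<Sum>x<n. \<Sum>y<n. A $$ (x,y) * w y) = (\<Sum>x<n. \<Sum>y<n. A $$ (x,y) * w x)"
  proof -
    have "(\<Sum>x<n. \<Sum>y<n. A $$ (x,y) * w y) = (\<Sum>y<n. \<Sum>x<n. A $$ (x,y) * w y)" by (rule sum.swap)
    also have "\<dots> = (\<Sum>y<n. \<Sum>x<n. A $$ (y,x) * w y)" using sym by simp
    finally show ?thesis .
  qed
  also have "((\<Sum>x<n. \<Sum>y<n. A $$ (x,y) * w x) + (\<Sum>x<n. \<Sum>y<n. A $$ (x,y) * w x)) / 2
      = (\<Sum>x<n. (\<Sum>y<n. A $$ (x,y)) * w x)"
    by (simp add: sum_distrib_right)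
  finally show ?thesis unfolding w_def .
qed

lemma size_filter_upt:
  "size (filter_mset Q (mset (map g [0..<n]))) = card {i. i < n \<and> Q (g i)}"
proof -
  have "size (filter_mset Q (mset (map g [0..<n]))) = length (filter (Q \<circ> g) [0..<n])"
    by (metis filter_map length_map mset_filter size_mset)
  also have "\<dots> = card {i. i < n \<and> Q (g i)}"
    by (simp add: length_filter_conv_card) (intro arg_cong[where f=card], auto)
  finally show ?thesis .
qed

lemma sum_mset_upt:
  "(\<Sum>x\<in>#mset (map g [0..<n]). f x) = (\<Sum>i<n. f (g i))"
proof -
  have "(\<Sum>x\<in>#mset (map g [0..<n]). f x) = sum_list (map f (map g [0..<n]))"
    by (metis mset_map sum_mset_sum_list)
  also have "\<dots> = (\<Sum>i<n. f (g i))"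
    by (simp add: sum_list_sum_nth atLeast0LessThan)
  finally show ?thesis .
qed

theorem mainTheorem13:
  fixes n :: nat and E :: "nat \<Rightarrow> nat \<Rightarrow> bool"
  assumes "simple_graph n E"
  shows "energy n E \<le> 2 * real (sum_list (take (min (nu_plus n E) (nu_minus n E)) (sorted_degrees n E)))"
proof -
  define A where "A = adj_matrix n E"
  have A: "A \<in> carrier_mat n n" unfolding A_def adj_matrix_def by simp
  have Aent: "\<And>x y. x < n \<Longrightarrow> y < n \<Longrightarrow> A $$ (x,y) = (if E x y then 1 else 0)"
    unfolding A_def adj_matrix_def by simp
  have sym: "\<And>x y. x < n \<Longrightarrow> y < n \<Longrightarrow> A $$ (x,y) = A $$ (y,x)"
    using assms Aent unfolding simple_graph_def by simp
  have Anneg: "\<And>x y. x < n \<Longrightarrow> y < n \<Longrightarrow> A $$ (x,y) \<ge> 0" using Aent by simp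
  have Adiag: "\<And>x. x < n \<Longrightarrow> A $$ (x,x) = 0" using assms Aent unfolding simple_graph_def by simp
  obtain u l where
    orth: "\<forall>i<n. \<forall>j<n. (\<Sum>b<n. u i b * u j b) = (if i = j then 1 else 0)" and
    orth2: "\<forall>x<n. \<forall>y<n. (\<Sum>i<n. u i x * u i y) = (if x = y then 1 else 0)" and
    eig: "\<forall>i<n. \<forall>x<n. (\<Sum>b<n. A $$ (x,b) * u i b) = l i * u i x" and
    cp: "char_poly A = (\<Prod>i\<leftarrow>[0..<n]. [:- l i, 1:])"
    using spectral[OF A sym] by blast
  have ev: "adj_eigenvalues n E = mset (map (\<lambda>i. complex_of_real (l i)) [0..<n])"
  proof -
    have "adj_eigenvalues n E = proots (\<Prod>i\<leftarrow>[0..<n]. [:- complex_of_real (l i), 1:])"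
      unfolding adj_eigenvalues_def A_def[symmetric] cp_of_real[OF A] cp map_poly_linear_prod ..
    also have "(\<Prod>i\<leftarrow>[0..<n]. [:- complex_of_real (l i), 1:]) = (\<Prod>a\<leftarrow>map (\<lambda>i. complex_of_real (l i)) [0..<n]. [:- a, 1:])"
      by (simp add: comp_def)
    finally show ?thesis by (simp only: proots_linear_prod)
  qed
  define P where "P = {i. i < n \<and> 0 < l i}"
  define N where "N = {i. i < n \<and> l i < 0}"
  have PN: "P \<subseteq> {..<n}" "N \<subseteq> {..<n}" unfolding P_def N_def by auto
  have nup: "nu_plus n E = card P"
    unfolding nu_plus_def ev size_filter_upt P_def by simp
  have num: "nu_minus n E = card N"
    unfolding nu_minus_def ev size_filter_upt N_def by simp
  have en: "energy n E = (\<Sum>i<n. \<bar>l i\<bar>)"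
    unfolding energy_def ev sum_mset_upt by simp
  have sP: "(\<Sum>i\<in>P. l i) = (\<Sum>i<n. if 0 < l i then l i else 0)"
  proof -
    have "P = {i \<in> {..<n}. 0 < l i}" unfolding P_def by auto
    hence "(\<Sum>i\<in>P. l i) = (\<Sum>i\<in>{i \<in> {..<n}. 0 < l i}. l i)" by (rule arg_cong)
    also have "\<dots> = (\<Sum>i<n. if 0 < l i then l i else 0)" by (rule sum.inter_filter) simp
    finally show ?thesis .
  qed
  have sN: "(\<Sum>i\<in>N. l i) = (\<Sum>i<n. if l i < 0 then l i else 0)"
  proof -
    have "N = {i \<in> {..<n}. l i < 0}" unfolding N_def by auto
    hence "(\<Sum>i\<in>N. l i) = (\<Sum>i\<in>{i \<in> {..<n}. l i < 0}. l i)" by (rule arg_cong)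
    also have "\<dots> = (\<Sum>i<n. if l i < 0 then l i else 0)" by (rule sum.inter_filter) simp
    finally show ?thesis .
  qed
  have en2: "energy n E = (\<Sum>i\<in>P. l i) - (\<Sum>i\<in>N. l i)"
    unfolding en sP sN sum_subtractf[symmetric] by (intro sum.cong) auto
  have tr0: "(\<Sum>i<n. l i) = 0"
  proof -
    have "(\<Sum>i<n. l i) = (\<Sum>i<n. \<Sum>x<n. u i x * (l i * u i x))"
      using orth by (simp add: sum_distrib_left[symmetric] mult.commute mult.left_commute)
    also have "\<dots> = (\<Sum>i<n. \<Sum>x<n. u i x * (\<Sum>y<n. A $$ (x,y) * u i y))"
      using eig by simp
    also have "\<dots> = (\<Sum>x<n. \<Sum>y<n. A $$ (x,y) * (\<Sum>i<n. u i x * u i y))"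
    proof -
      have "(\<Sum>i<n. \<Sum>x<n. u i x * (\<Sum>y<n. A $$ (x,y) * u i y)) = (\<Sum>i<n. \<Sum>x<n. \<Sum>y<n. A $$ (x,y) * (u i x * u i y))"
        by (simp add: sum_distrib_left mult.commute mult.left_commute)
      also have "\<dots> = (\<Sum>x<n. \<Sum>i<n. \<Sum>y<n. A $$ (x,y) * (u i x * u i y))" by (rule sum.swap)
      also have "\<dots> = (\<Sum>x<n. \<Sum>y<n. \<Sum>i<n. A $$ (x,y) * (u i x * u i y))" by (rule sum.cong[OF refl]) (rule sum.swap)
      finally show ?thesis by (simp add: sum_distrib_left)
    qed
    also have "\<dots> = (\<Sum>x<n. \<Sum>y<n. A $$ (x,y) * (if x = y then 1 else 0))"
      using orth2 by simp
    also have "\<dots> = (\<Sum>x<n. A $$ (x,x))" by (simp add: if_distrib cong: if_cong)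
    also have "\<dots> = 0" using Adiag by simp
    finally show ?thesis .
  qed
  have sum0: "(\<Sum>i\<in>P. l i) + (\<Sum>i\<in>N. l i) = 0"
  proof -
    have "(\<Sum>i<n. (if 0 < l i then l i else 0) + (if l i < 0 then l i else 0)) = (\<Sum>i<n. l i)"
      by (intro sum.cong) auto
    thus ?thesis unfolding sP sN sum.distrib[symmetric] using tr0 by simp
  qed
  have deg: "(\<Sum>y<n. A $$ (x,y)) = real (degree_v n E x)" if x: "x < n" for x
  proof -
    have "(\<Sum>y<n. A $$ (x,y)) = (\<Sum>y<n. if E x y then 1 else 0)" using Aent x by simp
    also have "\<dots> = real (card {y \<in> {..<n}. E x y})" by (simp add: sum.inter_filter[symmetric])
    also have "{y \<in> {..<n}. E x y} = {j. j < n \<and> E x j}" by auto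
    finally show ?thesis unfolding degree_v_def by simp
  qed
  have bound: "\<sigma> * (\<Sum>i\<in>S. l i) \<le> real (sum_list (take (card S) (sorted_degrees n E)))"
    if S: "S \<subseteq> {..<n}" and sg: "\<sigma> = 1 \<or> \<sigma> = -1" for S \<sigma>
  proof -
    define w where "w = (\<lambda>x. \<Sum>i\<in>S. (u i x)^2)"
    have "\<sigma> * (\<Sum>i\<in>S. l i) \<le> (\<Sum>x<n. (\<Sum>y<n. A $$ (x,y)) * w x)"
      unfolding w_def by (rule sign_bound[OF Anneg sym eig orth S sg])
    also have "\<dots> = (\<Sum>x<n. real (degree_v n E x) * w x)" using deg by simp
    also have "\<dots> \<le> real (sum_list (take (card S) (rev (sort (map (degree_v n E) [0..<n])))))"
    proof (rule top_weights)
      fix x assume x: "x < n"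
      have "w x \<le> (\<Sum>i<n. (u i x)^2)" unfolding w_def by (rule sum_mono2) (use S in auto)
      also have "\<dots> = 1" using orth2 x by (simp add: power2_eq_square)
      finally show "0 \<le> w x \<and> w x \<le> 1" unfolding w_def by (simp add: sum_nonneg)
    next
      have "(\<Sum>x<n. w x) = (\<Sum>i\<in>S. \<Sum>x<n. (u i x)^2)" unfolding w_def by (rule sum.swap)
      also have "\<dots> = (\<Sum>i\<in>S. 1)" using orth S by (intro sum.cong) (auto simp: power2_eq_square)
      finally show "(\<Sum>x<n. w x) = real (card S)" by simp
    next
      show "card S \<le> n" using S by (metis card_lessThan card_mono finite_lessThan)
    qed
    finally show ?thesis unfolding sorted_degrees_def .
  qed
  have bP: "(\<Sum>i\<in>P. l i) \<le> real (sum_list (take (card P) (sorted_degrees n E)))"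
    using bound[OF PN(1), of 1] by simp
  have bN: "- (\<Sum>i\<in>N. l i) \<le> real (sum_list (take (card N) (sorted_degrees n E)))"
    using bound[OF PN(2), of "-1"] by simp
  show ?thesis
  proof (cases "card P \<le> card N")
    case True
    hence "min (nu_plus n E) (nu_minus n E) = card P" using nup num by simp
    thus ?thesis using en2 sum0 bP by simp
  next
    case False
    hence "min (nu_plus n E) (nu_minus n E) = card N" using nup num by simp
    thus ?thesis using en2 sum0 bN by simp
  qed
qed
end
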